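(* Let $X$ be the compound-Poisson-driven Ornstein–Uhlenbeck process of the context and $G$ the law of the log jump sizes. (i) If $\int xG(dx)=\infty$, then $X$ is not positive recurrent. (ii) If $G$ is heavy-tailed, then $X$ is not geometrically ergodic.
   Context: $X$ is the $[0,\infty)$-valued process solving $dX_t=-\mu X_tdt+dZ_t$ with $\mu>0$, $Z_t=\sum_{i=1}^{N_t}W_i$, where $(W_i)_{i\ge1}$ are i.i.d. with law $F$ on $(0,\infty)$ and $(N_t)$ is a Poisson process of finite rate $\lambda>0$ independent of $(W_i)$. $G$ is the law of $\log W_1$, i.e. $G(A)=F(e^A)$. A probability measure is heavy-tailed if, for a random variable $Y$ with that law, $\mathbb E[e^{\kappa Y}]=\infty$ for all $\kappa>0$. Positive recurrent: Harris recurrent with a finite invariant measure. Geometrically ergodic: there is an invariant probability $\pi$ and $\kappa>1$ with $\lim_t\kappa^t\|P^t(x,\cdot)-\pi\|_{TV}=0$ for all $x$. *)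

theory Defs
  imports "HOL-Probability.Probability"
begin

definition poisson_process :: "'a measure \<Rightarrow> real \<Rightarrow> (real \<Rightarrow> 'a \<Rightarrow> nat) \<Rightarrow> bool" where
  "poisson_process M lam N \<longleftrightarrow>
     prob_space M \<and>
     (\<forall>t. N t \<in> measurable M (count_space UNIV)) \<and>
     (\<forall>\<omega>\<in>space M. N 0 \<omega> = 0 \<and> mono_on {0..} (\<lambda>t. N t \<omega>) \<and>
        (\<forall>t\<ge>0. continuous (at_right t) (\<lambda>s. real (N s \<omega>)))) \<and>
     (\<forall>s t k. 0 \<le> s \<longrightarrow> s \<le> t \<longrightarrow>
        measure M {\<omega>\<in>space M. N t \<omega> - N s \<omega> = k}
          = (lam * (t - s)) ^ k / fact k * exp (- (lam * (t - s)))) \<and>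
     (\<forall>(n::nat) (ts::nat \<Rightarrow> real). 0 \<le> ts 0 \<longrightarrow> (\<forall>i<n. ts i \<le> ts (Suc i)) \<longrightarrow>
        prob_space.indep_vars M (\<lambda>_. count_space UNIV)
          (\<lambda>i \<omega>. N (ts (Suc i)) \<omega> - N (ts i) \<omega>) {..<n})"

definition cpp :: "(real \<Rightarrow> 'a \<Rightarrow> nat) \<Rightarrow> (nat \<Rightarrow> 'a \<Rightarrow> real) \<Rightarrow> real \<Rightarrow> 'a \<Rightarrow> real" where
  "cpp N W t \<omega> = (\<Sum>i\<in>{1..N t \<omega>}. W i \<omega>)"

text \<open>Xx is the (pathwise) solution started at x of dX_t = - mu X_t dt + dZ_t, i.e.
  X_t = x - mu int_0^t X_s ds + Z_t for all t >= 0 (paths locally integrable).\<close>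
definition ou_solution ::
  "'a measure \<Rightarrow> real \<Rightarrow> (real \<Rightarrow> 'a \<Rightarrow> nat) \<Rightarrow> (nat \<Rightarrow> 'a \<Rightarrow> real) \<Rightarrow> real \<Rightarrow> (real \<Rightarrow> 'a \<Rightarrow> real) \<Rightarrow> bool"
  where
  "ou_solution M \<mu> N W x Xx \<longleftrightarrow>
     (\<forall>t\<ge>0. Xx t \<in> borel_measurable M) \<and>
     (\<forall>\<omega>\<in>space M. \<forall>t\<ge>0.
        set_integrable lborel {0..t} (\<lambda>s. Xx s \<omega>) \<and>
        Xx t \<omega> = x - \<mu> * (LBINT s:{0..t}. Xx s \<omega>) + cpp N W t \<omega>)"

definition trans :: "'a measure \<Rightarrow> (real \<Rightarrow> real \<Rightarrow> 'a \<Rightarrow> real) \<Rightarrow> real \<Rightarrow> real \<Rightarrow> real measure" where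
  "trans M X t x = distr M borel (X x t)"

definition invariant_measure :: "'a measure \<Rightarrow> (real \<Rightarrow> real \<Rightarrow> 'a \<Rightarrow> real) \<Rightarrow> real measure \<Rightarrow> bool" where
  "invariant_measure M X \<pi> \<longleftrightarrow>
     sets \<pi> = sets borel \<and> emeasure \<pi> (- {0..}) = 0 \<and> emeasure \<pi> {0..} > 0 \<and>
     (\<forall>t\<ge>0. \<forall>A\<in>sets borel. emeasure \<pi> A = (\<integral>\<^sup>+ x. emeasure (trans M X t x) A \<partial>\<pi>))"

definition harris_recurrent :: "'a measure \<Rightarrow> (real \<Rightarrow> real \<Rightarrow> 'a \<Rightarrow> real) \<Rightarrow> bool" where
  "harris_recurrent M X \<longleftrightarrow>
     (\<exists>\<phi>. sets \<phi> = sets borel \<and> sigma_finite_measure \<phi> \<and>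
        emeasure \<phi> (- {0..}) = 0 \<and> emeasure \<phi> {0..} > 0 \<and>
        (\<forall>A\<in>sets borel. emeasure \<phi> A > 0 \<longrightarrow>
           (\<forall>x\<ge>0. AE \<omega> in M. (\<integral>\<^sup>+ t. indicator ({0..} \<inter> {t. X x t \<omega> \<in> A}) t \<partial>lborel) = \<infinity>)))"

definition positive_recurrent :: "'a measure \<Rightarrow> (real \<Rightarrow> real \<Rightarrow> 'a \<Rightarrow> real) \<Rightarrow> bool" where
  "positive_recurrent M X \<longleftrightarrow>
     harris_recurrent M X \<and> (\<exists>\<pi>. invariant_measure M X \<pi> \<and> emeasure \<pi> UNIV < \<infinity>)"

definition tv_norm :: "real measure \<Rightarrow> real measure \<Rightarrow> real" where
  "tv_norm \<mu> \<nu> = (SUP A\<in>sets \<mu>. \<bar>measure \<mu> A - measure \<nu> A\<bar>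
                      + \<bar>measure \<mu> (space \<mu> - A) - measure \<nu> (space \<mu> - A)\<bar>)"

definition geometrically_ergodic :: "'a measure \<Rightarrow> (real \<Rightarrow> real \<Rightarrow> 'a \<Rightarrow> real) \<Rightarrow> bool" where
  "geometrically_ergodic M X \<longleftrightarrow>
     (\<exists>\<pi> \<kappa>. invariant_measure M X \<pi> \<and> prob_space \<pi> \<and> \<kappa> > 1 \<and>
        (\<forall>x\<ge>0. ((\<lambda>t. \<kappa> powr t * tv_norm (trans M X t x) \<pi>) \<longlongrightarrow> 0) at_top))"

definition heavy_tailed :: "real measure \<Rightarrow> bool" where
  "heavy_tailed G \<longleftrightarrow> (\<forall>\<kappa>>0. (\<integral>\<^sup>+ y. ennreal (exp (\<kappa> * y)) \<partial>G) = \<infinity>)"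

end

theory Submission
  imports Defs
begin

lemma compare_G:
  fixes V :: "real \<Rightarrow> real" and c s T r1 :: real
  assumes int: "V integrable_on {s..T}" and c: "c \<ge> 0" and V0: "V s \<ge> 0"
    and step: "\<And>r' r. s \<le> r' \<Longrightarrow> r' \<le> r \<Longrightarrow> r \<le> T \<Longrightarrow>
                 V r - V r' \<ge> - c * (integral {s..r} V - integral {s..r'} V)"
    and r1: "s \<le> r1" "r1 \<le> T"
  shows "V r1 \<ge> 0"
proof (rule ccontr)
  assume neg: "\<not> V r1 \<ge> 0"
  define I where "I r = integral {s..r} V" for r
  have contI: "continuous_on {s..T} I"
    unfolding I_def by (rule indefinite_integral_continuous_1[OF int])
  define S where "S = {r \<in> {s..r1}. V r \<ge> 0}"
  define a where "a = Sup S"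
  have sS: "s \<in> S" using V0 r1 by (auto simp: S_def)
  have bdd: "bdd_above S" unfolding S_def by (rule bdd_aboveI[of _ r1]) auto
  have sa: "s \<le> a" unfolding a_def using sS bdd by (rule cSup_upper)
  have ar1: "a \<le> r1" unfolding a_def using sS by (intro cSup_least) (auto simp: S_def)
  have negb: "V b < 0" if "a < b" "b \<le> r1" for b
  proof (rule ccontr)
    assume "\<not> V b < 0"
    hence "b \<in> S" using that sa by (auto simp: S_def)
    hence "b \<le> a" unfolding a_def using bdd by (rule cSup_upper)
    with that show False by simp
  qed
  have comb: "I r - I r' = integral {r'..r} V" if "s \<le> r'" "r' \<le> r" "r \<le> T" for r r'
  proof -
    have "V integrable_on {s..r}" using that by (intro integrable_subinterval_real[OF int]) auto
    from Henstock_Kurzweil_Integration.integral_combine[OF that(1,2) this] show ?thesis unfolding I_def by simp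
  qed
  have claim1: "I r1 - I a \<le> 0"
  proof (cases "a = r1")
    case True then show ?thesis by simp
  next
    case False
    hence altr: "a < r1" using ar1 by simp
    show ?thesis
    proof (rule ccontr)
      assume "\<not> I r1 - I a \<le> 0"
      hence e: "I r1 - I a > 0" by simp
      have "a \<in> {s..T}" using sa ar1 r1 by auto
      from contI[unfolded continuous_on_iff, rule_format, OF this e]
      obtain d where d: "d > 0" "\<And>x'. x' \<in> {s..T} \<Longrightarrow> dist x' a < d \<Longrightarrow> dist (I x') (I a) < I r1 - I a"
        by blast
      define b where "b = min (a + d/2) r1"
      have ab: "a < b" "b \<le> r1" using altr d by (auto simp: b_def)
      have "dist (I b) (I a) < I r1 - I a" using d ab sa r1 by (intro d(2)) (auto simp: b_def dist_real_def)
      hence "I r1 - I b > 0" by (auto simp: dist_real_def)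
      moreover have "integral {b..r1} V \<le> 0"
      proof -
        have "V integrable_on {b..r1}" using int ab sa r1 by (intro integrable_subinterval_real[OF int]) auto
        moreover have "\<And>x. x \<in> {b..r1} \<Longrightarrow> V x \<le> 0" using negb ab by (auto intro: less_imp_le)
        ultimately show ?thesis
          using integral_le[of V "{b..r1}" "\<lambda>_. 0"] by auto
      qed
      ultimately show False using comb[of b r1] ab sa r1 by simp
    qed
  qed
  have claim2: "\<exists>r'\<in>S. \<bar>I a - I r'\<bar> < e" if e: "e > 0" for e
  proof -
    have "a \<in> {s..T}" using sa ar1 r1 by auto
    from contI[unfolded continuous_on_iff, rule_format, OF this e]
    obtain d where d: "d > 0" "\<And>x'. x' \<in> {s..T} \<Longrightarrow> dist x' a < d \<Longrightarrow> dist (I x') (I a) < e"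
      by blast
    have "a - d < Sup S" using d unfolding a_def by simp
    from less_cSupE[OF this] obtain r' where r': "r' \<in> S" "a - d < r'"
      using sS by blast
    have "r' \<le> a" unfolding a_def using bdd r' by (intro cSup_upper) auto
    moreover have "r' \<in> {s..T}" using r' r1 by (auto simp: S_def)
    ultimately have "dist (I r') (I a) < e" using r' by (intro d(2)) (auto simp: dist_real_def)
    thus ?thesis using r' by (auto simp: dist_real_def abs_minus_commute)
  qed
  define e where "e = - V r1 / (2 * (c + 1))"
  have e0: "e > 0" using neg c unfolding e_def by (intro divide_pos_pos) auto
  obtain r' where r': "r' \<in> S" "\<bar>I a - I r'\<bar> < e" using claim2[OF e0] by blast
  have r'le: "s \<le> r'" "r' \<le> r1" "V r' \<ge> 0" using r' by (auto simp: S_def)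
  have "V r1 - V r' \<ge> - c * (I r1 - I r')" using step[OF r'le(1,2) r1(2)] unfolding I_def .
  hence "V r1 \<ge> - c * (I r1 - I a) - c * (I a - I r')" using r'le by (simp add: algebra_simps)
  moreover have "- c * (I r1 - I a) \<ge> 0" using claim1 c by (simp add: mult_nonneg_nonpos)
  moreover have "c * (I a - I r') \<le> c * e" using r' c by (intro mult_left_mono) auto
  moreover have "c * e < - V r1"
  proof -
    have "c * e \<le> (c+1) * e" using e0 by simp
    also have "... = - V r1 / 2" using c by (simp add: e_def field_simps)
    also have "... < - V r1" using neg by simp
    finally show ?thesis .
  qed
  ultimately show False by linarith
qed

lemma exp_integral:
  fixes \<mu> a b :: real
  assumes "\<mu> > 0" "a \<le> b"
  shows "((\<lambda>v. exp (- \<mu> * v)) has_integral (exp (- \<mu> * a) - exp (- \<mu> * b)) / \<mu>) {a..b}"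
proof -
  have "((\<lambda>v. exp (- \<mu> * v)) has_integral ((\<lambda>v. - exp (- \<mu> * v) / \<mu>) b - (\<lambda>v. - exp (- \<mu> * v) / \<mu>) a)) {a..b}"
  proof (rule fundamental_theorem_of_calculus[OF assms(2)])
    fix x :: real assume "x \<in> {a..b}"
    have "((\<lambda>v. - exp (- \<mu> * v) / \<mu>) has_real_derivative (- (exp (- \<mu> * x) * (- \<mu>)) / \<mu>)) (at x within {a..b})"
      by (auto intro!: derivative_eq_intros)
    thus "((\<lambda>v. - exp (- \<mu> * v) / \<mu>) has_vector_derivative exp (- \<mu> * x)) (at x within {a..b})"
      using assms(1) by (simp add: has_real_derivative_iff_has_vector_derivative[symmetric])
  qed
  thus ?thesis by (simp add: diff_divide_distrib)
qed

lemma exp_integrable: "(\<lambda>v::real. (c::real) * exp (- (\<mu>::real) * v)) integrable_on {a..b}"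
  by (rule integrable_continuous_real) (intro continuous_intros)

definition ode_sol :: "real \<Rightarrow> (real \<Rightarrow> real) \<Rightarrow> real \<Rightarrow> (real \<Rightarrow> real) \<Rightarrow> bool" where
  "ode_sol \<mu> U u0 A \<longleftrightarrow> (\<forall>t\<ge>0. U integrable_on {0..t} \<and> U t = u0 - \<mu> * integral {0..t} U + A t)"

lemma ode_sol_int: "ode_sol \<mu> U u0 A \<Longrightarrow> 0 \<le> r \<Longrightarrow> r \<le> t \<Longrightarrow> U integrable_on {0..r}"
  unfolding ode_sol_def by auto

lemma ode_lower_exp:
  fixes \<mu> u0 t :: real
  assumes \<mu>: "\<mu> > 0" and H: "ode_sol \<mu> U u0 A" and Am: "mono_on {0..} A" and A0: "A 0 = 0"
    and t: "t \<ge> 0"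
  shows "U t \<ge> exp (- \<mu> * t) * u0"
proof -
  define V where "V r = U r - u0 * exp (- \<mu> * r)" for r
  have intU: "U integrable_on {0..t}" using H t unfolding ode_sol_def by auto
  have intV: "V integrable_on {0..t}" unfolding V_def
    by (intro integrable_diff intU exp_integrable)
  have IV: "integral {0..r} V = integral {0..r} U - u0 * ((1 - exp (- \<mu> * r)) / \<mu>)"
    if "0 \<le> r" "r \<le> t" for r
  proof -
    have iU: "U integrable_on {0..r}" using H that unfolding ode_sol_def by auto
    have "integral {0..r} V = integral {0..r} U - integral {0..r} (\<lambda>v. u0 * exp (- \<mu> * v))"
      unfolding V_def by (intro integral_diff iU exp_integrable)
    also have "integral {0..r} (\<lambda>v. u0 * exp (- \<mu> * v)) = u0 * integral {0..r} (\<lambda>v. exp (- \<mu> * v))"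
      by simp
    also have "integral {0..r} (\<lambda>v. exp (- \<mu> * v)) = (1 - exp (- \<mu> * r)) / \<mu>"
      using exp_integral[OF \<mu> that(1)] by (simp add: integral_unique)
    finally show ?thesis .
  qed
  have "V t \<ge> 0"
  proof (rule compare_G[OF intV, of \<mu> t])
    show "0 \<le> \<mu>" using \<mu> by simp
    show "0 \<le> V 0" using H A0 unfolding V_def ode_sol_def by auto
    fix r' r assume r: "0 \<le> r'" "r' \<le> r" "r \<le> t"
    have Ur: "U r = u0 - \<mu> * integral {0..r} U + A r" and Ur': "U r' = u0 - \<mu> * integral {0..r'} U + A r'"
      using H r unfolding ode_sol_def by auto
    have "A r' \<le> A r" using Am r by (auto simp: mono_on_def)
    thus "- \<mu> * (integral {0..r} V - integral {0..r'} V) \<le> V r - V r'"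
      using r \<mu> unfolding IV[OF order.trans[OF r(1,2)] r(3)] IV[OF r(1) order.trans[OF r(2,3)]]
      unfolding V_def Ur Ur' by (simp add: field_simps)
  qed (use t in auto)
  thus ?thesis unfolding V_def by (simp add: mult.commute)
qed

lemma ode_compare:
  fixes \<mu> u0 u1 t :: real
  assumes \<mu>: "\<mu> > 0" and H: "ode_sol \<mu> U u1 A" and H0: "ode_sol \<mu> U0 u0 A" and u: "u0 \<le> u1"
    and t: "t \<ge> 0"
  shows "U t \<ge> U0 t"
proof -
  define V where "V r = U r - U0 r" for r
  have intV: "V integrable_on {0..t}" unfolding V_def
    using H H0 t unfolding ode_sol_def by (intro integrable_diff) auto
  have IV: "integral {0..r} V = integral {0..r} U - integral {0..r} U0"
    if "0 \<le> r" "r \<le> t" for r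
    unfolding V_def using H H0 that unfolding ode_sol_def by (intro integral_diff) auto
  have "V t \<ge> 0"
  proof (rule compare_G[OF intV, of \<mu> t])
    show "0 \<le> \<mu>" using \<mu> by simp
    show "0 \<le> V 0" using H H0 u unfolding V_def ode_sol_def by auto
    fix r' r assume r: "0 \<le> r'" "r' \<le> r" "r \<le> t"
    have Ur: "U r = u1 - \<mu> * integral {0..r} U + A r" and Ur': "U r' = u1 - \<mu> * integral {0..r'} U + A r'"
      and U0r: "U0 r = u0 - \<mu> * integral {0..r} U0 + A r" and U0r': "U0 r' = u0 - \<mu> * integral {0..r'} U0 + A r'"
      using H H0 r unfolding ode_sol_def by auto
    show "- \<mu> * (integral {0..r} V - integral {0..r'} V) \<le> V r - V r'"
      using r \<mu> unfolding IV[OF order.trans[OF r(1,2)] r(3)] IV[OF r(1) order.trans[OF r(2,3)]]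
      unfolding V_def Ur Ur' U0r U0r' by (simp add: field_simps)
  qed (use t in auto)
  thus ?thesis unfolding V_def by simp
qed

lemma ode_lower_jump:
  fixes \<mu> w1 t :: real and J :: "real \<Rightarrow> real"
  assumes \<mu>: "\<mu> > 0" and H: "ode_sol \<mu> U 0 A" and Am: "mono_on {0..} A" and A0: "A 0 = 0"
    and Jm: "mono_on {0..} J" and J01: "\<And>r. J r = 0 \<or> J r = 1" and J0: "J 0 = 0"
    and JA0: "\<And>r. r \<ge> 0 \<Longrightarrow> J r = 0 \<Longrightarrow> A r = 0"
    and JA1: "\<And>r. r \<ge> 0 \<Longrightarrow> J r = 1 \<Longrightarrow> A r \<ge> w1"
    and w1: "w1 \<ge> 0" and t: "t \<ge> 0"
  shows "U t \<ge> w1 * exp (- \<mu> * t) * J t"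
proof -
  define w where "w r = J r * (w1 * exp (- \<mu> * r))" for r
  define V where "V r = U r - w r" for r
  have intU: "U integrable_on {0..t}" using H t unfolding ode_sol_def by auto
  have Jmt: "mono_on {0..t} J" using Jm by (rule mono_on_subset) auto
  have Jmeas: "J \<in> borel_measurable (lebesgue_on {0..t})"
    using integrable_mono_on[OF Jmt] by (rule borel_measurable_integrable)
  have Jbdd: "bounded (J ` {0..t})"
  proof -
    have "J ` {0..t} \<subseteq> {0, 1}" using J01 by auto
    thus ?thesis by (rule bounded_subset[rotated]) simp
  qed
  have "w absolutely_integrable_on {0..t}" unfolding w_def
    by (intro absolutely_integrable_bounded_measurable_product_real Jmeas Jbdd
        absolutely_integrable_continuous_real) (auto intro!: continuous_intros)
  hence intw: "w integrable_on {0..t}" using absolutely_integrable_on_def by blast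
  have intV: "V integrable_on {0..t}" unfolding V_def
    by (intro integrable_diff intU intw)
  have IV: "integral {0..r} V = integral {0..r} U - integral {0..r} w"
    if "0 \<le> r" "r \<le> t" for r
  proof -
    have "U integrable_on {0..r}" "w integrable_on {0..r}"
      using that by (auto intro: integrable_subinterval_real[OF intU] integrable_subinterval_real[OF intw])
    thus ?thesis unfolding V_def by (intro integral_diff)
  qed
  have "V t \<ge> 0"
  proof (rule compare_G[OF intV, of \<mu> t])
    show "0 \<le> \<mu>" using \<mu> by simp
    show "0 \<le> V 0" using H A0 J0 unfolding V_def w_def ode_sol_def by auto
    fix r' r assume r: "0 \<le> r'" "r' \<le> r" "r \<le> t"
    have Ur: "U r = 0 - \<mu> * integral {0..r} U + A r" and Ur': "U r' = 0 - \<mu> * integral {0..r'} U + A r'"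
      using H r unfolding ode_sol_def by auto
    have Amon: "A r' \<le> A r" using Am r by (auto simp: mono_on_def)
    have Jmon: "J v \<le> J r" if "r' \<le> v" "v \<le> r" for v
      using Jm r that by (auto simp: mono_on_def)
    have comb: "integral {0..r} w - integral {0..r'} w = integral {r'..r} w"
    proof -
      have "w integrable_on {0..r}" using r by (auto intro: integrable_subinterval_real[OF intw])
      from Henstock_Kurzweil_Integration.integral_combine[OF r(1,2) this] show ?thesis by simp
    qed
    have ibound: "integral {r'..r} w \<le> J r * (w1 * ((exp (- \<mu> * r') - exp (- \<mu> * r)) / \<mu>))"
    proof -
      have i1: "w integrable_on {r'..r}" using r by (auto intro: integrable_subinterval_real[OF intw])
      have h2: "((\<lambda>v. J r * (w1 * exp (- \<mu> * v))) has_integral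
                  J r * (w1 * ((exp (- \<mu> * r') - exp (- \<mu> * r)) / \<mu>))) {r'..r}"
        by (intro has_integral_mult_right exp_integral \<mu> r)
      have "integral {r'..r} w \<le> integral {r'..r} (\<lambda>v. J r * (w1 * exp (- \<mu> * v)))"
      proof (rule integral_le[OF i1])
        show "(\<lambda>v. J r * (w1 * exp (- \<mu> * v))) integrable_on {r'..r}" using h2 by blast
        fix v assume "v \<in> {r'..r}"
        thus "w v \<le> J r * (w1 * exp (- \<mu> * v))" unfolding w_def using Jmon w1
          by (intro mult_right_mono) auto
      qed
      also have "... = J r * (w1 * ((exp (- \<mu> * r') - exp (- \<mu> * r)) / \<mu>))"
        using h2 by (rule integral_unique)
      finally show ?thesis .
    qed
    have key: "\<mu> * integral {r'..r} w + (w r - w r') \<le> A r - A r'"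
    proof -
      have "\<mu> * integral {r'..r} w \<le> J r * (w1 * (exp (- \<mu> * r') - exp (- \<mu> * r)))"
      proof -
        have "\<mu> * integral {r'..r} w \<le> \<mu> * (J r * (w1 * ((exp (- \<mu> * r') - exp (- \<mu> * r)) / \<mu>)))"
          using mult_left_mono[OF ibound, of \<mu>] \<mu> by simp
        also have "... = J r * (w1 * (exp (- \<mu> * r') - exp (- \<mu> * r)))" using \<mu> by simp
        finally show ?thesis .
      qed
      hence le: "\<mu> * integral {r'..r} w + (w r - w r') \<le> w1 * exp (- \<mu> * r') * (J r - J r')"
        unfolding w_def by (simp add: algebra_simps)
      consider "J r' = J r" | "J r' = 0" "J r = 1" using J01[of r] J01[of r'] Jmon[of r'] r by force
      thus ?thesis
      proof cases
        case 1 thus ?thesis using le Amon by simp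
      next
        case 2
        have "exp (- \<mu> * r') \<le> 1" using \<mu> r by simp
        hence "w1 * exp (- \<mu> * r') \<le> w1" using w1 by (simp add: mult_left_le)
        moreover have "A r' = 0" using JA0 2 r by simp
        moreover have "A r \<ge> w1" using JA1 2 r by simp
        ultimately show ?thesis using le 2 by simp
      qed
    qed
    show "- \<mu> * (integral {0..r} V - integral {0..r'} V) \<le> V r - V r'"
      unfolding IV[OF order.trans[OF r(1,2)] r(3)] IV[OF r(1) order.trans[OF r(2,3)]]
      using key comb unfolding V_def Ur Ur' by (simp add: algebra_simps)
  qed (use t in auto)
  thus ?thesis unfolding V_def w_def by (simp add: mult.commute mult.left_commute)
qed

locale ou_setting = prob_space M for M :: "'a measure" +
  fixes \<mu> lam :: real and N :: "real \<Rightarrow> 'a \<Rightarrow> nat"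
    and W :: "nat \<Rightarrow> 'a \<Rightarrow> real" and F :: "real measure"
    and X :: "real \<Rightarrow> real \<Rightarrow> 'a \<Rightarrow> real"
  assumes mu: "\<mu> > 0" and lam: "lam > 0"
    and PP: "poisson_process M lam N"
    and F: "prob_space F" and sF: "sets F = sets borel" and F0: "emeasure F {0<..} = 1"
    and Wd: "\<forall>i\<ge>1. W i \<in> borel_measurable M \<and> distr M borel (W i) = F"
    and ind: "prob_space.indep_set M
           (sigma_sets (space M) (\<Union>t. {N t -` A \<inter> space M | A. A \<subseteq> (UNIV::nat set)}))
           (sigma_sets (space M) (\<Union>i\<in>{1..}. {W i -` B \<inter> space M | B. B \<in> sets borel}))"
    and sol: "\<forall>x\<ge>0. ou_solution M \<mu> N W x (X x)"
begin

lemma spaceF: "space F = UNIV"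
  using sets_eq_imp_space_eq[OF sF] by simp

lemma F_nonpos: "emeasure F {..0} = 0"
proof -
  interpret F: prob_space F by (rule F)
  have m1: "F.prob {0<..} = 1" using F0 by (simp add: F.emeasure_eq_measure)
  have "F.prob (space F - {0<..}) = 0"
    using F.prob_compl[of "{0<..}"] m1 sF by simp
  moreover have "space F - {0<..} = {..0}" using spaceF by auto
  ultimately show ?thesis by (simp add: F.emeasure_eq_measure)
qed

lemma Wmeas: "i \<ge> 1 \<Longrightarrow> W i \<in> borel_measurable M" using Wd by auto
lemma Wdistr: "i \<ge> 1 \<Longrightarrow> distr M borel (W i) = F" using Wd by auto

lemma AE_good: "AE \<omega> in M. \<forall>i\<ge>1. 0 \<le> W i \<omega>"
proof -
  have "AE \<omega> in M. 1 \<le> i \<longrightarrow> 0 \<le> W i \<omega>" for i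
  proof (cases "i \<ge> 1")
    case True
    have meas: "{\<omega>\<in>space M. W i \<omega> \<in> {..<0}} \<in> sets M"
      using Wmeas[OF True] by measurable
    have "emeasure M {\<omega>\<in>space M. W i \<omega> \<in> {..<0}} = emeasure (distr M borel (W i)) {..<0}"
      using Wmeas[OF True] by (subst emeasure_distr) (auto simp: vimage_def Int_def conj_commute)
    also have "... = emeasure F {..<0}" using Wdistr[OF True] by simp
    also have "... \<le> emeasure F {..0}" by (intro emeasure_mono) (auto simp: sF)
    finally have "emeasure M {\<omega>\<in>space M. W i \<omega> \<in> {..<0}} = 0" using F_nonpos by simp
    hence "AE \<omega> in M. 0 \<le> W i \<omega>"
      by (subst AE_iff_measurable[OF meas]) (auto simp: not_le)
    thus ?thesis by auto
  qed simp
  thus ?thesis by (subst AE_all_countable) auto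
qed

lemma PP_space: "\<omega> \<in> space M \<Longrightarrow> N 0 \<omega> = 0 \<and> mono_on {0..} (\<lambda>t. N t \<omega>)"
  using PP unfolding poisson_process_def by auto

lemma cpp_mono:
  assumes "\<omega> \<in> space M" "\<forall>i\<ge>1. 0 \<le> W i \<omega>"
  shows "mono_on {0..} (\<lambda>t. cpp N W t \<omega>)"
proof (rule mono_onI)
  fix r s :: real assume rs: "r \<in> {0..}" "s \<in> {0..}" "r \<le> s"
  have "N r \<omega> \<le> N s \<omega>" using PP_space[OF assms(1)] rs by (auto simp: mono_on_def)
  thus "cpp N W r \<omega> \<le> cpp N W s \<omega>" unfolding cpp_def
    using assms(2) by (intro sum_mono2) auto
qed

lemma cpp_0: "\<omega> \<in> space M \<Longrightarrow> cpp N W 0 \<omega> = 0"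
  using PP_space unfolding cpp_def by simp

lemma sol_ode:
  assumes "x \<ge> 0" "\<omega> \<in> space M"
  shows "ode_sol \<mu> (\<lambda>t. X x t \<omega>) x (\<lambda>t. cpp N W t \<omega>)"
  unfolding ode_sol_def
proof (intro allI impI conjI)
  fix t :: real assume t: "t \<ge> 0"
  have si: "set_integrable lborel {0..t} (\<lambda>s. X x s \<omega>)"
    and eq: "X x t \<omega> = x - \<mu> * (LBINT s:{0..t}. X x s \<omega>) + cpp N W t \<omega>"
    using sol assms t unfolding ou_solution_def by auto
  show "(\<lambda>t. X x t \<omega>) integrable_on {0..t}" using set_borel_integral_eq_integral(1)[OF si] .
  show "X x t \<omega> = x - \<mu> * integral {0..t} (\<lambda>t. X x t \<omega>) + cpp N W t \<omega>"
    using eq set_borel_integral_eq_integral(2)[OF si] by simp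
qed

lemma path_bounds:
  assumes x: "x \<ge> 0" and \<omega>: "\<omega> \<in> space M" "\<forall>i\<ge>1. 0 \<le> W i \<omega>" and t: "t \<ge> 0"
  shows "X x t \<omega> \<ge> exp (- \<mu> * t) * x" "X x t \<omega> \<ge> X 0 t \<omega>"
    "X 0 t \<omega> \<ge> W 1 \<omega> * exp (- \<mu> * t) * (if N t \<omega> \<ge> 1 then 1 else 0)"
proof -
  show "X x t \<omega> \<ge> exp (- \<mu> * t) * x"
    by (rule ode_lower_exp[OF mu sol_ode[OF x \<omega>(1)] cpp_mono[OF \<omega>] cpp_0[OF \<omega>(1)] t])
  show "X x t \<omega> \<ge> X 0 t \<omega>"
    by (rule ode_compare[OF mu sol_ode[OF x \<omega>(1)] sol_ode[OF order.refl \<omega>(1)] x t])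
  define J where "J r = (if 0 \<le> r \<and> 1 \<le> N r \<omega> then 1 else 0::real)" for r
  have "X 0 t \<omega> \<ge> W 1 \<omega> * exp (- \<mu> * t) * J t"
  proof (rule ode_lower_jump[OF mu sol_ode[OF order.refl \<omega>(1)] cpp_mono[OF \<omega>] cpp_0[OF \<omega>(1)]])
    show "mono_on {0..} J"
    proof (rule mono_onI)
      fix r s :: real assume rs: "r \<in> {0..}" "s \<in> {0..}" "r \<le> s"
      have "N r \<omega> \<le> N s \<omega>" using PP_space[OF \<omega>(1)] rs by (auto simp: mono_on_def)
      thus "J r \<le> J s" using rs unfolding J_def by auto
    qed
    show "J r = 0 \<or> J r = 1" for r unfolding J_def by auto
    show "J 0 = 0" using PP_space[OF \<omega>(1)] unfolding J_def by auto
    show "cpp N W r \<omega> = 0" if "r \<ge> 0" "J r = 0" for r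
      using that unfolding J_def cpp_def by (auto split: if_splits)
    show "cpp N W r \<omega> \<ge> W 1 \<omega>" if "r \<ge> 0" "J r = 1" for r
    proof -
      have "1 \<le> N r \<omega>" using that unfolding J_def by (auto split: if_splits)
      thus ?thesis unfolding cpp_def using \<omega>(2)
        by (intro member_le_sum) auto
    qed
    show "0 \<le> W 1 \<omega>" using \<omega>(2) by auto
  qed (use t in auto)
  thus "X 0 t \<omega> \<ge> W 1 \<omega> * exp (- \<mu> * t) * (if N t \<omega> \<ge> 1 then 1 else 0)"
    using t unfolding J_def by auto
qed

end

context ou_setting begin

lemma Xmeas: "x \<ge> 0 \<Longrightarrow> t \<ge> 0 \<Longrightarrow> X x t \<in> borel_measurable M"
  using sol unfolding ou_solution_def by auto

lemma Xev: "x \<ge> 0 \<Longrightarrow> t \<ge> 0 \<Longrightarrow> {\<omega>\<in>space M. y < X x t \<omega>} \<in> events"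
  using Xmeas by measurable

definition q :: "real \<Rightarrow> real \<Rightarrow> real" where
  "q t y = prob {\<omega>\<in>space M. y < X 0 t \<omega>}"

lemma q_le1: "q t y \<le> 1" unfolding q_def by simp
lemma q_ge0: "q t y \<ge> 0" unfolding q_def by simp

lemma prob_mono_X:
  assumes "x \<ge> 0" "t \<ge> 0"
  shows "q t y \<le> prob {\<omega>\<in>space M. y < X x t \<omega>}"
  unfolding q_def
proof (rule finite_measure_mono_AE[OF _ Xev[OF assms]])
  show "AE \<omega> in M. \<omega> \<in> {\<omega> \<in> space M. y < X 0 t \<omega>} \<longrightarrow> \<omega> \<in> {\<omega> \<in> space M. y < X x t \<omega>}"
    using AE_good
  proof eventually_elim
    case (elim \<omega>)
    thus ?case using path_bounds(2)[OF assms(1) _ elim assms(2)] by auto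
  qed
qed

lemma prob_one_X:
  assumes "x \<ge> 0" "t \<ge> 0" "exp (- \<mu> * t) * x > y"
  shows "prob {\<omega>\<in>space M. y < X x t \<omega>} = 1"
proof -
  have "AE \<omega> in M. \<omega> \<in> {\<omega>\<in>space M. y < X x t \<omega>}"
    using AE_good AE_space
  proof eventually_elim
    case (elim \<omega>)
    thus ?case using path_bounds(1)[OF assms(1) _ _ assms(2), of \<omega>] assms(3) by auto
  qed
  thus ?thesis by (subst (asm) AE_in_set_eq_1[OF Xev[OF assms(1,2)]])
qed

lemma trans_emeasure:
  assumes "x \<ge> 0" "t \<ge> 0"
  shows "emeasure (trans M X t x) {y<..} = ennreal (prob {\<omega>\<in>space M. y < X x t \<omega>})"
  unfolding trans_def using Xmeas[OF assms]
  by (subst emeasure_distr) (auto simp: emeasure_eq_measure vimage_def Int_def conj_commute)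

lemma pt_lower:
  assumes x: "x \<ge> 0" and t: "t \<ge> 0"
  shows "indicator {y * exp (\<mu> * t)<..} x + indicator {..y * exp (\<mu> * t)} x * ennreal (q t y)
         \<le> emeasure (trans M X t x) {y<..}"
proof (cases "x > y * exp (\<mu> * t)")
  case True
  have "exp (- \<mu> * t) * x > exp (- \<mu> * t) * (y * exp (\<mu> * t))"
    using True by (intro mult_strict_left_mono) auto
  also have "exp (- \<mu> * t) * (y * exp (\<mu> * t)) = y"
    by (simp add: exp_minus field_simps)
  finally have "prob {\<omega>\<in>space M. y < X x t \<omega>} = 1" by (intro prob_one_X x t)
  thus ?thesis using True trans_emeasure[OF x t] by simp
next
  case False
  thus ?thesis using trans_emeasure[OF x t] prob_mono_X[OF x t] by (simp add: ennreal_leI)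
qed

lemma inv_ineq:
  assumes inv: "invariant_measure M X \<pi>" and t: "t \<ge> 0"
  shows "emeasure \<pi> {y * exp (\<mu> * t)<..} + emeasure \<pi> {..y * exp (\<mu> * t)} * ennreal (q t y)
          \<le> emeasure \<pi> {y<..}"
proof -
  let ?b = "y * exp (\<mu> * t)"
  have sp: "sets \<pi> = sets borel" and neg: "emeasure \<pi> (- {0..}) = 0"
    and eq: "emeasure \<pi> {y<..} = (\<integral>\<^sup>+ x. emeasure (trans M X t x) {y<..} \<partial>\<pi>)"
    using inv t unfolding invariant_measure_def by auto
  have spc: "space \<pi> = UNIV" using sets_eq_imp_space_eq[OF sp] by simp
  have AEpos: "AE x in \<pi>. x \<ge> 0"
    by (subst AE_iff_measurable[of "- {0..}"]) (auto simp: sp spc neg[unfolded Compl_atLeast] Compl_atLeast)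
  have "(\<integral>\<^sup>+ x. (indicator {?b<..} x + indicator {..?b} x * ennreal (q t y)) \<partial>\<pi>)
        \<le> (\<integral>\<^sup>+ x. emeasure (trans M X t x) {y<..} \<partial>\<pi>)"
    using AEpos by (intro nn_integral_mono_AE) (auto elim!: eventually_mono intro: pt_lower t)
  also have "(\<integral>\<^sup>+ x. (indicator {?b<..} x + indicator {..?b} x * ennreal (q t y)) \<partial>\<pi>)
       = emeasure \<pi> {?b<..} + emeasure \<pi> {..?b} * ennreal (q t y)"
  proof -
    have "(\<integral>\<^sup>+ x. (indicator {?b<..} x + indicator {..?b} x * ennreal (q t y)) \<partial>\<pi>)
       = (\<integral>\<^sup>+ x. indicator {?b<..} x \<partial>\<pi>) + (\<integral>\<^sup>+ x. ennreal (q t y) * indicator {..?b} x \<partial>\<pi>)"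
    proof (subst nn_integral_add)
      show "indicator {?b<..} \<in> borel_measurable \<pi>"
        by (subst measurable_cong_sets[OF sp refl]) simp
      show "(\<lambda>x. indicator {..?b} x * ennreal (q t y)) \<in> borel_measurable \<pi>"
        by (subst measurable_cong_sets[OF sp refl]) simp
    qed (simp add: mult.commute)
    also have "... = emeasure \<pi> {?b<..} + ennreal (q t y) * emeasure \<pi> {..?b}"
      by (subst nn_integral_cmult_indicator) (auto simp: sp)
    finally show ?thesis by (simp add: mult.commute)
  qed
  finally show ?thesis using eq by simp
qed

lemma N_meas: "N t \<in> measurable M (count_space UNIV)"
  using PP unfolding poisson_process_def by auto

lemma prob_N1: "prob {\<omega>\<in>space M. 1 \<le> N 1 \<omega>} = 1 - exp (- lam)"
proof -
  have all: "\<forall>s t k. 0 \<le> s \<longrightarrow> s \<le> t \<longrightarrow> measure M {\<omega>\<in>space M. N t \<omega> - N s \<omega> = k}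
          = (lam * (t - s)) ^ k / fact k * exp (- (lam * (t - s)))"
    using PP unfolding poisson_process_def by blast
  have a: "prob {\<omega>\<in>space M. N 1 \<omega> - N 0 \<omega> = 0} = exp (- lam)"
    using all[rule_format, of 0 1 0] by simp
  have "{\<omega>\<in>space M. N 1 \<omega> - N 0 \<omega> = 0} = {\<omega>\<in>space M. N 1 \<omega> = 0}"
    using PP_space by auto
  hence p0: "prob {\<omega>\<in>space M. N 1 \<omega> = 0} = exp (- lam)" using a by simp
  have ev: "{\<omega>\<in>space M. N 1 \<omega> = 0} \<in> events" using N_meas[of 1] by measurable
  have "space M - {\<omega>\<in>space M. N 1 \<omega> = 0} = {\<omega>\<in>space M. 1 \<le> N 1 \<omega>}" by auto
  thus ?thesis using prob_compl[OF ev] p0 by simp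
qed

lemma q1_lower:
  "q 1 z \<ge> (1 - exp (- lam)) * measure F {z * exp \<mu><..}"
proof -
  define E1 where "E1 = N 1 -` {1..} \<inter> space M"
  define E2 where "E2 = W 1 -` {z * exp \<mu><..} \<inter> space M"
  have E1: "E1 \<in> sigma_sets (space M) (\<Union>t. {N t -` A \<inter> space M | A. A \<subseteq> (UNIV::nat set)})"
    unfolding E1_def by (rule sigma_sets.Basic) blast
  have E2: "E2 \<in> sigma_sets (space M) (\<Union>i\<in>{1..}. {W i -` B \<inter> space M | B. B \<in> sets borel})"
  proof -
    have "E2 \<in> {W 1 -` B \<inter> space M | B. B \<in> sets borel}" unfolding E2_def
      by (intro CollectI exI[of _ "{z * exp \<mu><..}"]) simp
    hence "E2 \<in> (\<Union>i\<in>{1..}. {W i -` B \<inter> space M | B. B \<in> sets borel})"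
      by (intro UN_I[of 1]) auto
    thus ?thesis by (rule sigma_sets.Basic)
  qed
  have pind: "prob (E1 \<inter> E2) = prob E1 * prob E2" by (rule indep_setD[OF ind E1 E2])
  have pE1: "prob E1 = 1 - exp (- lam)"
    using prob_N1 unfolding E1_def by (simp add: vimage_def Int_def conj_commute)
  have pE2: "prob E2 = measure F {z * exp \<mu><..}"
    using measure_distr[OF Wmeas[of 1], of "{z * exp \<mu><..}"] Wdistr[of 1]
    unfolding E2_def by simp
  have "prob (E1 \<inter> E2) \<le> q 1 z"
    unfolding q_def
  proof (rule finite_measure_mono_AE[OF _ Xev])
    show "AE \<omega> in M. \<omega> \<in> E1 \<inter> E2 \<longrightarrow> \<omega> \<in> {\<omega> \<in> space M. z < X 0 1 \<omega>}"
      using AE_good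
    proof eventually_elim
      case (elim \<omega>)
      show ?case
      proof
        assume \<omega>: "\<omega> \<in> E1 \<inter> E2"
        hence sp: "\<omega> \<in> space M" and n1: "1 \<le> N 1 \<omega>" and w: "W 1 \<omega> > z * exp \<mu>"
          unfolding E1_def E2_def by auto
        have "X 0 1 \<omega> \<ge> W 1 \<omega> * exp (- \<mu>)"
          using path_bounds(3)[OF order.refl sp elim, of 1] n1 by simp
        moreover have "W 1 \<omega> * exp (- \<mu>) > z * exp \<mu> * exp (- \<mu>)"
          using w by (intro mult_strict_right_mono) auto
        moreover have "z * exp \<mu> * exp (- \<mu>) = z" by (simp add: exp_minus)
        ultimately show "\<omega> \<in> {\<omega> \<in> space M. z < X 0 1 \<omega>}" using sp by auto
      qed
    qed
  qed auto
  thus ?thesis using pind pE1 pE2 by simp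
qed

end

context ou_setting begin

lemma distr_ln_integral:
  assumes "\<And>w. f w \<ge> (0::ennreal)" "f \<in> borel_measurable borel"
  shows "(\<integral>\<^sup>+ v. f v \<partial>(distr F borel ln)) = (\<integral>\<^sup>+ w. f (ln w) \<partial>F)"
proof (rule nn_integral_distr)
  show "ln \<in> borel_measurable F" by (subst measurable_cong_sets[OF sF refl]) simp
  show "f \<in> borel_measurable (distr F borel ln)" using assms(2) by simp
qed

lemma AE_F_pos: "AE w in F. w > 0"
proof -
  have "AE w in F. w \<notin> {..0}"
    using F_nonpos by (intro AE_I'[of "{..0}"]) (auto simp: sF)
  thus ?thesis by (auto elim: eventually_mono)
qed

lemma log_pointwise:
  assumes w: "w > 0" and y: "y \<ge> 1"
  shows "ennreal (ln w) \<le> ennreal (ln y + 2 * \<mu>) +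
           (\<Sum>k. ennreal \<mu> * indicator {y * exp (\<mu> * (real k + 1))<..} w)"
proof -
  define s where "s = (ln w - ln y) / \<mu>"
  define n where "n = nat \<lfloor>s\<rfloor>"
  have ly: "ln y \<ge> 0" using y by simp
  have ind1: "indicator {y * exp (\<mu> * (real k + 1))<..} w = (1::ennreal)" if k: "k < n - 1" for k
  proof -
    have "real k + 1 < s"
    proof -
      have "real k + 1 \<le> real n - 1 + 1" using k by linarith
      moreover have "real n \<le> s" using k unfolding n_def by linarith
      moreover have "real k + 1 < real n" using k by linarith
      ultimately show ?thesis by linarith
    qed
    hence "ln y + \<mu> * (real k + 1) < ln w" using mu unfolding s_def by (simp add: field_simps)
    hence "exp (ln y + \<mu> * (real k + 1)) < exp (ln w)" by simp
    hence "y * exp (\<mu> * (real k + 1)) < w" using w y by (simp add: exp_add)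
    thus ?thesis by simp
  qed
  have "(\<Sum>k<n-1. ennreal \<mu> * indicator {y * exp (\<mu> * (real k + 1))<..} w) = of_nat (n - 1) * ennreal \<mu>"
    using ind1 by simp
  also have "... = ennreal (\<mu> * real (n - 1))"
    using mu by (simp add: ennreal_of_nat_eq_real_of_nat ennreal_mult' mult.commute)
  finally have sumeq: "(\<Sum>k<n-1. ennreal \<mu> * indicator {y * exp (\<mu> * (real k + 1))<..} w) = ennreal (\<mu> * real (n - 1))" .
  have "(\<Sum>k<n-1. ennreal \<mu> * indicator {y * exp (\<mu> * (real k + 1))<..} w)
        \<le> (\<Sum>k. ennreal \<mu> * indicator {y * exp (\<mu> * (real k + 1))<..} w)"
    by (intro sum_le_suminf) auto
  hence S: "ennreal (\<mu> * real (n - 1)) \<le> (\<Sum>k. ennreal \<mu> * indicator {y * exp (\<mu> * (real k + 1))<..} w)"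
    using sumeq by simp
  have "real (n - 1) \<ge> s - 2"
  proof (cases "n \<ge> 1")
    case True
    hence "real (n - 1) = real n - 1" by simp
    moreover have "real n > s - 1" unfolding n_def by linarith
    ultimately show ?thesis by simp
  next
    case False
    hence "n = 0" by simp
    hence "s < 1" unfolding n_def by linarith
    thus ?thesis using \<open>n = 0\<close> by simp
  qed
  hence "\<mu> * real (n - 1) \<ge> \<mu> * (s - 2)" using mu by (intro mult_left_mono) auto
  moreover have "\<mu> * s = ln w - ln y" using mu unfolding s_def by simp
  ultimately have "ln w \<le> (ln y + 2 * \<mu>) + \<mu> * real (n - 1)" by (simp add: algebra_simps)
  hence "ennreal (ln w) \<le> ennreal ((ln y + 2 * \<mu>) + \<mu> * real (n - 1))" by (rule ennreal_leI)
  also have "... = ennreal (ln y + 2 * \<mu>) + ennreal (\<mu> * real (n - 1))"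
    using mu ly by (intro ennreal_plus) auto
  also have "... \<le> ennreal (ln y + 2 * \<mu>) + (\<Sum>k. ennreal \<mu> * indicator {y * exp (\<mu> * (real k + 1))<..} w)"
    using S by (rule add_left_mono)
  finally show ?thesis .
qed

lemma logmom_div:
  assumes lninf: "(\<integral>\<^sup>+ v. ennreal v \<partial>(distr F borel ln)) = \<infinity>" and y: "y \<ge> 1"
  shows "\<not> summable (\<lambda>k::nat. measure F {y * exp (\<mu> * (real k + 1))<..})"
proof
  interpret F: prob_space F by (rule F)
  assume sm: "summable (\<lambda>k::nat. measure F {y * exp (\<mu> * (real k + 1))<..})"
  have "(\<integral>\<^sup>+ v. ennreal v \<partial>(distr F borel ln)) = (\<integral>\<^sup>+ w. ennreal (ln w) \<partial>F)"
    by (rule distr_ln_integral) auto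
  also have "... \<le> (\<integral>\<^sup>+ w. (ennreal (ln y + 2 * \<mu>) +
           (\<Sum>k. ennreal \<mu> * indicator {y * exp (\<mu> * (real k + 1))<..} w)) \<partial>F)"
  proof (rule nn_integral_mono_AE)
    show "AE w in F. ennreal (ln w) \<le> ennreal (ln y + 2 * \<mu>) +
           (\<Sum>k. ennreal \<mu> * indicator {y * exp (\<mu> * (real k + 1))<..} w)"
      using AE_F_pos by eventually_elim (rule log_pointwise[OF _ y])
  qed
  also have "... = ennreal (ln y + 2 * \<mu>) + (\<Sum>k. ennreal \<mu> * emeasure F {y * exp (\<mu> * (real k + 1))<..})"
  proof -
    have "(\<integral>\<^sup>+ w. (ennreal (ln y + 2 * \<mu>) +
           (\<Sum>k. ennreal \<mu> * indicator {y * exp (\<mu> * (real k + 1))<..} w)) \<partial>F)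
        = (\<integral>\<^sup>+ w. ennreal (ln y + 2 * \<mu>) \<partial>F) +
          (\<integral>\<^sup>+ w. (\<Sum>k. ennreal \<mu> * indicator {y * exp (\<mu> * (real k + 1))<..} w) \<partial>F)"
      by (rule nn_integral_add) (auto simp: measurable_cong_sets[OF sF refl])
    also have "(\<integral>\<^sup>+ w. (\<Sum>k. ennreal \<mu> * indicator {y * exp (\<mu> * (real k + 1))<..} w) \<partial>F)
        = (\<Sum>k. \<integral>\<^sup>+ w. ennreal \<mu> * indicator {y * exp (\<mu> * (real k + 1))<..} w \<partial>F)"
      by (rule nn_integral_suminf) (auto simp: measurable_cong_sets[OF sF refl])
    also have "... = (\<Sum>k. ennreal \<mu> * emeasure F {y * exp (\<mu> * (real k + 1))<..})"
      by (subst nn_integral_cmult_indicator) (auto simp: sF)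
    finally show ?thesis by (simp add: F.emeasure_space_1)
  qed
  also have "(\<Sum>k. ennreal \<mu> * emeasure F {y * exp (\<mu> * (real k + 1))<..})
      = (\<Sum>k. ennreal (\<mu> * measure F {y * exp (\<mu> * (real k + 1))<..}))"
    using mu by (simp add: F.emeasure_eq_measure ennreal_mult')
  also have "... = ennreal (\<Sum>k. \<mu> * measure F {y * exp (\<mu> * (real k + 1))<..})"
    using mu sm by (intro suminf_ennreal2 summable_mult) auto
  finally have le: "(\<integral>\<^sup>+ v. ennreal v \<partial>(distr F borel ln)) \<le> ennreal (ln y + 2 * \<mu>) +
       ennreal (\<Sum>k. \<mu> * measure F {y * exp (\<mu> * (real k + 1))<..})" .
  have "ennreal (ln y + 2 * \<mu>) + ennreal (\<Sum>k. \<mu> * measure F {y * exp (\<mu> * (real k + 1))<..}) < \<infinity>"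
    by (simp add: less_top[symmetric])
  with le have "(\<integral>\<^sup>+ v. ennreal v \<partial>(distr F borel ln)) < \<infinity>" by (rule order.strict_trans1)
  thus False using lninf by simp
qed

end

context ou_setting begin

lemma prod_exp_bound:
  fixes a :: "nat \<Rightarrow> real"
  assumes "\<And>k. 0 \<le> a k" "\<And>k. a k \<le> 1"
  shows "(\<Prod>k<K. (1 - a k)) \<le> exp (- (\<Sum>k<K. a k))"
proof -
  have "(\<Prod>k<K. (1 - a k)) \<le> (\<Prod>k<K. exp (- a k))"
    using assms by (intro prod_mono) (auto simp: add.commute[of 1] exp_ge_add_one_self[of "- _", simplified])
  also have "... = exp (- (\<Sum>k<K. a k))" by (simp add: exp_sum sum_negf[symmetric])
  finally show ?thesis .
qed

lemma part1:
  assumes lninf: "(\<integral>\<^sup>+ v. ennreal v \<partial>(distr F borel ln)) = \<infinity>"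
    and inv: "invariant_measure M X \<pi>" and fin: "emeasure \<pi> UNIV < \<infinity>"
  shows False
proof -
  have sp: "sets \<pi> = sets borel" and pos: "emeasure \<pi> {0..} > 0"
    using inv unfolding invariant_measure_def by auto
  have spc: "space \<pi> = UNIV" using sets_eq_imp_space_eq[OF sp] by simp
  interpret P: finite_measure \<pi> by (rule finite_measureI) (use fin spc in auto)
  define m where "m = measure \<pi> UNIV"
  define u where "u y = measure \<pi> {..y}" for y
  define c where "c = 1 - exp (- lam)"
  have c: "c > 0" using lam unfolding c_def by simp
  have u_le: "u y \<le> m" for y unfolding u_def m_def by (intro P.finite_measure_mono) (auto simp: sp)
  have u_ge: "u y \<ge> 0" for y unfolding u_def by simp
  have compl: "measure \<pi> {y<..} = m - u y" for y
  proof -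
    have "measure \<pi> (space \<pi> - {..y}) = measure \<pi> (space \<pi>) - measure \<pi> {..y}"
      by (rule P.finite_measure_compl) (simp add: sp)
    moreover have "space \<pi> - {..y} = {y<..}" using spc by auto
    ultimately show ?thesis using spc unfolding m_def u_def by simp
  qed
  have stepA: "u y \<le> u (y * exp \<mu>) * (1 - q 1 y)" for y
  proof -
    have "emeasure \<pi> {y * exp (\<mu> * 1)<..} + emeasure \<pi> {..y * exp (\<mu> * 1)} * ennreal (q 1 y)
          \<le> emeasure \<pi> {y<..}" by (rule inv_ineq[OF inv]) simp
    hence "ennreal (measure \<pi> {y * exp \<mu><..}) + ennreal (u (y * exp \<mu>)) * ennreal (q 1 y)
          \<le> ennreal (measure \<pi> {y<..})" unfolding u_def by (simp add: P.emeasure_eq_measure)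
    hence "ennreal (measure \<pi> {y * exp \<mu><..} + u (y * exp \<mu>) * q 1 y) \<le> ennreal (measure \<pi> {y<..})"
      using u_ge q_ge0 by (simp add: ennreal_plus ennreal_mult')
    hence "measure \<pi> {y * exp \<mu><..} + u (y * exp \<mu>) * q 1 y \<le> measure \<pi> {y<..}"
      by (subst (asm) ennreal_le_iff) auto
    thus ?thesis unfolding compl by (simp add: algebra_simps)
  qed
  have stepB: "u y \<le> m * (\<Prod>k<K. (1 - q 1 (y * exp (\<mu> * real k))))" for K y
  proof (induction K arbitrary: y)
    case 0 thus ?case using u_le by simp
  next
    case (Suc K)
    have "u y \<le> u (y * exp \<mu>) * (1 - q 1 y)" by (rule stepA)
    also have "... \<le> (m * (\<Prod>k<K. (1 - q 1 (y * exp \<mu> * exp (\<mu> * real k))))) * (1 - q 1 y)"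
      using Suc.IH[of "y * exp \<mu>"] q_le1 by (intro mult_right_mono) auto
    also have "(\<Prod>k<K. (1 - q 1 (y * exp \<mu> * exp (\<mu> * real k)))) = (\<Prod>k<K. (1 - q 1 (y * exp (\<mu> * real (Suc k)))))"
      by (intro prod.cong refl) (simp add: exp_add[symmetric] algebra_simps)
    also have "m * (\<Prod>k<K. (1 - q 1 (y * exp (\<mu> * real (Suc k))))) * (1 - q 1 y)
             = m * (\<Prod>k<Suc K. (1 - q 1 (y * exp (\<mu> * real k))))"
      by (subst prod.lessThan_Suc_shift) (simp add: algebra_simps)
    finally show ?case .
  qed
  have u0: "u y = 0" if y: "y \<ge> 1" for y
  proof (rule ccontr)
    assume "u y \<noteq> 0"
    hence uy: "u y > 0" using u_ge[of y] by simp
    define g where "g k = measure F {y * exp (\<mu> * (real k + 1))<..}" for k :: nat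
    have "summable g"
    proof (rule summableI_nonneg_bounded)
      show "0 \<le> g k" for k unfolding g_def by simp
      fix K
      have a: "q 1 (y * exp (\<mu> * real k)) \<ge> c * g k" for k
      proof -
        have "q 1 (y * exp (\<mu> * real k)) \<ge> c * measure F {y * exp (\<mu> * real k) * exp \<mu><..}"
          using q1_lower unfolding c_def .
        moreover have "y * exp (\<mu> * real k) * exp \<mu> = y * exp (\<mu> * (real k + 1))"
          by (simp add: exp_add[symmetric] algebra_simps)
        ultimately show ?thesis unfolding g_def by simp
      qed
      have "u y \<le> m * exp (- (\<Sum>k<K. q 1 (y * exp (\<mu> * real k))))"
      proof -
        have "u y \<le> m * (\<Prod>k<K. (1 - q 1 (y * exp (\<mu> * real k))))" by (rule stepB)
        also have "... \<le> m * exp (- (\<Sum>k<K. q 1 (y * exp (\<mu> * real k))))"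
          using u_le[of y] u_ge[of y] by (intro mult_left_mono prod_exp_bound q_ge0 q_le1) auto
        finally show ?thesis .
      qed
      also have "... \<le> m * exp (- (c * (\<Sum>k<K. g k)))"
      proof -
        have "c * (\<Sum>k<K. g k) \<le> (\<Sum>k<K. q 1 (y * exp (\<mu> * real k)))"
          unfolding sum_distrib_left using a by (intro sum_mono) auto
        thus ?thesis using u_le[of y] u_ge[of y] by (intro mult_left_mono) auto
      qed
      finally have "u y \<le> m * exp (- (c * (\<Sum>k<K. g k)))" .
      moreover have "m > 0" using uy u_le[of y] by simp
      ultimately have "u y / m \<le> exp (- (c * (\<Sum>k<K. g k)))"
        by (simp add: pos_divide_le_eq mult.commute)
      hence "ln (u y / m) \<le> ln (exp (- (c * (\<Sum>k<K. g k))))"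
        using uy \<open>m > 0\<close> by (subst ln_le_cancel_iff) auto
      hence "ln (u y / m) \<le> - (c * (\<Sum>k<K. g k))" by simp
      hence "c * (\<Sum>k<K. g k) \<le> - ln (u y / m)" by simp
      thus "(\<Sum>k<K. g k) \<le> - ln (u y / m) / c" using c by (simp add: field_simps)
    qed
    moreover have "\<not> summable g" unfolding g_def by (rule logmom_div[OF lninf y])
    ultimately show False by simp
  qed
  have "emeasure \<pi> (\<Union>n. {..real n + 1}) = 0"
  proof (rule emeasure_UN_eq_0)
    show "emeasure \<pi> {..real n + 1} = 0" for n
      using u0[of "real n + 1"] unfolding u_def by (simp add: P.emeasure_eq_measure)
  qed (auto simp: sp)
  moreover have "{0..} \<subseteq> (\<Union>n. {..real n + 1})"
  proof
    fix x :: real assume "x \<in> {0..}"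
    obtain n where "x \<le> real n" using real_arch_simple by blast
    hence "x \<in> {..real n + 1}" by simp
    thus "x \<in> (\<Union>n. {..real n + 1})" by blast
  qed
  ultimately have "emeasure \<pi> {0..} = 0"
  proof -
    have "(\<Union>n. {..real n + 1}) \<in> sets \<pi>" unfolding sp by measurable
    hence "emeasure \<pi> {0..} \<le> emeasure \<pi> (\<Union>n. {..real n + 1})"
      using \<open>{0..} \<subseteq> (\<Union>n. {..real n + 1})\<close> by (rule emeasure_mono[rotated])
    thus ?thesis using \<open>emeasure \<pi> (\<Union>n. {..real n + 1}) = 0\<close> by simp
  qed
  thus False using pos by simp
qed

end

lemma ennreal_term_le_suminf: "(f::nat \<Rightarrow> ennreal) k \<le> suminf f"
  using sum_le_suminf[of f "{k}"] by (simp add: summableI)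

context ou_setting begin

lemma exp_pointwise:
  fixes a y0 :: real and N1 :: nat
  assumes w: "w > 0" and y0: "y0 > 0" and a: "a > 0"
  shows "ennreal (exp (a * ln w)) \<le> ennreal (exp (a * (ln y0 + \<mu> * (real N1 + 1)))) +
     (\<Sum>k. ennreal (exp (a * (ln y0 + \<mu> * (real (k + N1) + 2)))) *
            indicator {y0 * exp (\<mu> * (real (k + N1) + 1))<..} w)"
proof (cases "ln w \<le> ln y0 + \<mu> * (real N1 + 1)")
  case True
  hence "exp (a * ln w) \<le> exp (a * (ln y0 + \<mu> * (real N1 + 1)))" using a by simp
  hence "ennreal (exp (a * ln w)) \<le> ennreal (exp (a * (ln y0 + \<mu> * (real N1 + 1))))" by (rule ennreal_leI)
  thus ?thesis by (intro add_increasing2) auto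
next
  case False
  define s where "s = (ln w - ln y0) / \<mu>"
  have ms: "\<mu> * s = ln w - ln y0" using mu unfolding s_def by simp
  have sN: "s > real N1 + 1"
  proof -
    have "\<mu> * s > \<mu> * (real N1 + 1)" using False ms by simp
    thus ?thesis using mu by simp
  qed
  define n where "n = nat \<lceil>s\<rceil> - 2"
  have cs: "real_of_int \<lceil>s\<rceil> \<ge> s" "real_of_int \<lceil>s\<rceil> < s + 1" by linarith+
  have cN: "\<lceil>s\<rceil> \<ge> int N1 + 2" using sN cs by linarith
  have nreal: "real n = real_of_int \<lceil>s\<rceil> - 2" unfolding n_def using cN by simp
  have nN: "n \<ge> N1" using cN unfolding n_def by linarith
  define k where "k = n - N1"
  have kn: "k + N1 = n" using nN unfolding k_def by simp
  have low: "ln w > ln y0 + \<mu> * (real n + 1)"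
  proof -
    have "real n + 1 < s" using nreal cs by linarith
    hence "\<mu> * (real n + 1) < \<mu> * s" using mu by simp
    thus ?thesis using ms by simp
  qed
  have up: "ln w \<le> ln y0 + \<mu> * (real n + 2)"
  proof -
    have "s \<le> real n + 2" using nreal cs by linarith
    hence "\<mu> * s \<le> \<mu> * (real n + 2)" using mu by simp
    thus ?thesis using ms by simp
  qed
  have ind: "indicator {y0 * exp (\<mu> * (real (k + N1) + 1))<..} w = (1::ennreal)"
  proof -
    have "exp (ln y0 + \<mu> * (real n + 1)) < exp (ln w)" using low by simp
    hence "y0 * exp (\<mu> * (real n + 1)) < w" using w y0 by (simp add: exp_add)
    thus ?thesis using kn by simp
  qed
  have "exp (a * ln w) \<le> exp (a * (ln y0 + \<mu> * (real (k + N1) + 2)))"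
    using up a kn by simp
  hence "ennreal (exp (a * ln w)) \<le> ennreal (exp (a * (ln y0 + \<mu> * (real (k + N1) + 2)))) *
            indicator {y0 * exp (\<mu> * (real (k + N1) + 1))<..} w"
    using ind by (simp add: ennreal_leI)
  also have "... \<le> (\<Sum>k. ennreal (exp (a * (ln y0 + \<mu> * (real (k + N1) + 2)))) *
            indicator {y0 * exp (\<mu> * (real (k + N1) + 1))<..} w)"
    by (rule ennreal_term_le_suminf)
  finally show ?thesis by (intro add_increasing) auto
qed

end

context ou_setting begin

lemma heavy_contra:
  fixes \<kappa> y0 C :: real and N1 :: nat
  assumes \<kappa>: "\<kappa> > 1" and y0: "y0 > 0" and C: "C \<ge> 0"
    and bd: "\<And>n. n \<ge> N1 \<Longrightarrow> measure F {y0 * exp (\<mu> * (real n + 1))<..} \<le> C / \<kappa> ^ n"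
  shows "\<not> heavy_tailed (distr F borel ln)"
proof
  interpret F: prob_space F by (rule F)
  assume heavy: "heavy_tailed (distr F borel ln)"
  define a where "a = ln \<kappa> / (2 * \<mu>)"
  have lk: "ln \<kappa> > 0" using \<kappa> by simp
  have a: "a > 0" using lk mu unfolding a_def by simp
  have amu: "a * \<mu> = ln \<kappa> / 2" using mu unfolding a_def by simp
  define e where "e k = exp (a * (ln y0 + \<mu> * (real (k + N1) + 2)))" for k
  define S where "S k = {y0 * exp (\<mu> * (real (k + N1) + 1))<..}" for k
  define r where "r = exp (- (ln \<kappa> / 2))"
  define D where "D = C * exp (a * (ln y0 + 2 * \<mu>))"
  have r: "0 < r" "r < 1" using lk unfolding r_def by auto
  have D: "D \<ge> 0" using C unfolding D_def by simp
  have inf: "(\<integral>\<^sup>+ v. ennreal (exp (a * v)) \<partial>(distr F borel ln)) = \<infinity>"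
    using heavy a unfolding heavy_tailed_def by auto
  have "(\<integral>\<^sup>+ v. ennreal (exp (a * v)) \<partial>(distr F borel ln)) = (\<integral>\<^sup>+ w. ennreal (exp (a * ln w)) \<partial>F)"
    by (rule distr_ln_integral) auto
  also have "... \<le> (\<integral>\<^sup>+ w. (ennreal (exp (a * (ln y0 + \<mu> * (real N1 + 1)))) +
           (\<Sum>k. ennreal (e k) * indicator (S k) w)) \<partial>F)"
  proof (rule nn_integral_mono_AE)
    show "AE w in F. ennreal (exp (a * ln w)) \<le> ennreal (exp (a * (ln y0 + \<mu> * (real N1 + 1)))) +
           (\<Sum>k. ennreal (e k) * indicator (S k) w)"
      using AE_F_pos unfolding e_def S_def by eventually_elim (rule exp_pointwise[OF _ y0 a])
  qed
  also have "... = ennreal (exp (a * (ln y0 + \<mu> * (real N1 + 1)))) + (\<Sum>k. ennreal (e k) * emeasure F (S k))"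
  proof -
    have "(\<integral>\<^sup>+ w. (ennreal (exp (a * (ln y0 + \<mu> * (real N1 + 1)))) +
           (\<Sum>k. ennreal (e k) * indicator (S k) w)) \<partial>F)
        = (\<integral>\<^sup>+ w. ennreal (exp (a * (ln y0 + \<mu> * (real N1 + 1)))) \<partial>F) +
          (\<integral>\<^sup>+ w. (\<Sum>k. ennreal (e k) * indicator (S k) w) \<partial>F)"
      by (rule nn_integral_add) (auto simp: measurable_cong_sets[OF sF refl] S_def)
    also have "(\<integral>\<^sup>+ w. (\<Sum>k. ennreal (e k) * indicator (S k) w) \<partial>F)
        = (\<Sum>k. \<integral>\<^sup>+ w. ennreal (e k) * indicator (S k) w \<partial>F)"
      by (rule nn_integral_suminf) (auto simp: measurable_cong_sets[OF sF refl] S_def)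
    also have "... = (\<Sum>k. ennreal (e k) * emeasure F (S k))"
      by (subst nn_integral_cmult_indicator) (auto simp: sF S_def)
    finally show ?thesis by (simp add: F.emeasure_space_1)
  qed
  also have "... \<le> ennreal (exp (a * (ln y0 + \<mu> * (real N1 + 1)))) + (\<Sum>k. ennreal (D * r ^ (k + N1)))"
  proof -
    have sle: "(\<Sum>k. ennreal (e k) * emeasure F (S k)) \<le> (\<Sum>k. ennreal (D * r ^ (k + N1)))"
    proof (rule suminf_le)
      fix k
      have eS: "emeasure F (S k) \<le> ennreal (C / \<kappa> ^ (k + N1))"
        using bd[of "k + N1"] unfolding S_def by (simp add: F.emeasure_eq_measure ennreal_leI)
      have "ennreal (e k) * emeasure F (S k) \<le> ennreal (e k) * ennreal (C / \<kappa> ^ (k + N1))"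
        using eS by (rule mult_left_mono) simp
      also have "... = ennreal (e k * (C / \<kappa> ^ (k + N1)))"
        by (rule ennreal_mult'[symmetric]) (simp add: e_def)
      also have "e k * (C / \<kappa> ^ (k + N1)) = D * r ^ (k + N1)"
      proof -
        have kp: "\<kappa> ^ (k + N1) = exp (real (k + N1) * ln \<kappa>)"
          unfolding exp_of_nat_mult using \<kappa> by simp
        have rp: "r ^ (k + N1) = exp (real (k + N1) * (- (ln \<kappa> / 2)))"
          unfolding r_def exp_of_nat_mult by (rule refl)
        have "e k = exp (a * (ln y0 + 2 * \<mu>)) * exp (real (k + N1) * (ln \<kappa> / 2))"
        proof -
          have "e k = exp (a * (ln y0 + 2 * \<mu>) + real (k + N1) * (a * \<mu>))"
            unfolding e_def by (rule arg_cong[where f=exp]) (simp add: algebra_simps)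
          thus ?thesis unfolding amu exp_add .
        qed
        hence "e k * (C / \<kappa> ^ (k + N1)) = C * exp (a * (ln y0 + 2 * \<mu>)) *
                 (exp (real (k + N1) * (ln \<kappa> / 2)) / exp (real (k + N1) * ln \<kappa>))"
          unfolding kp by simp
        also have "exp (real (k + N1) * (ln \<kappa> / 2)) / exp (real (k + N1) * ln \<kappa>) = r ^ (k + N1)"
          unfolding rp exp_diff[symmetric] by (simp add: algebra_simps)
        finally show ?thesis unfolding D_def .
      qed
      finally show "ennreal (e k) * emeasure F (S k) \<le> ennreal (D * r ^ (k + N1))" .
    qed (auto intro: summableI)
    thus ?thesis by (rule add_left_mono)
  qed
  also have "(\<Sum>k. ennreal (D * r ^ (k + N1))) = ennreal (\<Sum>k. D * r ^ (k + N1))"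
  proof (rule suminf_ennreal2)
    show "0 \<le> D * r ^ (k + N1)" for k using D r by simp
    have "summable (\<lambda>k. (D * r ^ N1) * r ^ k)" using r by (intro summable_mult summable_geometric) auto
    thus "summable (\<lambda>k. D * r ^ (k + N1))" by (simp add: power_add mult.assoc mult.commute mult.left_commute)
  qed
  finally have "(\<integral>\<^sup>+ v. ennreal (exp (a * v)) \<partial>(distr F borel ln)) \<le>
      ennreal (exp (a * (ln y0 + \<mu> * (real N1 + 1)))) + ennreal (\<Sum>k. D * r ^ (k + N1))" .
  moreover have "ennreal (exp (a * (ln y0 + \<mu> * (real N1 + 1)))) + ennreal (\<Sum>k. D * r ^ (k + N1)) < \<infinity>"
    by (simp add: less_top[symmetric])
  ultimately have "(\<integral>\<^sup>+ v. ennreal (exp (a * v)) \<partial>(distr F borel ln)) < \<infinity>"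
    by (rule order.strict_trans1)
  thus False using inf by simp
qed

end

context ou_setting begin

lemma inv_ineq_real:
  assumes inv: "invariant_measure M X \<pi>" and pp: "prob_space \<pi>" and t: "t \<ge> 0"
  shows "measure \<pi> {y * exp (\<mu> * t)<..} + (1 - measure \<pi> {y * exp (\<mu> * t)<..}) * q t y
          \<le> measure \<pi> {y<..}"
proof -
  interpret P: prob_space \<pi> by (rule pp)
  have sp: "sets \<pi> = sets borel" using inv unfolding invariant_measure_def by auto
  have spc: "space \<pi> = UNIV" using sets_eq_imp_space_eq[OF sp] by simp
  let ?b = "y * exp (\<mu> * t)"
  have cmp: "measure \<pi> {..?b} = 1 - measure \<pi> {?b<..}"
  proof -
    have "measure \<pi> (space \<pi> - {?b<..}) = 1 - measure \<pi> {?b<..}"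
      by (rule P.prob_compl) (simp add: sp)
    moreover have "space \<pi> - {?b<..} = {..?b}" using spc by auto
    ultimately show ?thesis by simp
  qed
  have "emeasure \<pi> {?b<..} + emeasure \<pi> {..?b} * ennreal (q t y) \<le> emeasure \<pi> {y<..}"
    by (rule inv_ineq[OF inv t])
  hence "ennreal (measure \<pi> {?b<..}) + ennreal (measure \<pi> {..?b}) * ennreal (q t y)
          \<le> ennreal (measure \<pi> {y<..})" by (simp add: P.emeasure_eq_measure)
  hence "ennreal (measure \<pi> {?b<..} + measure \<pi> {..?b} * q t y) \<le> ennreal (measure \<pi> {y<..})"
    using q_ge0 by (simp add: ennreal_plus ennreal_mult')
  hence "measure \<pi> {?b<..} + measure \<pi> {..?b} * q t y \<le> measure \<pi> {y<..}"
    by (subst (asm) ennreal_le_iff) auto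
  thus ?thesis unfolding cmp .
qed

lemma tv_bound:
  assumes pp: "prob_space \<pi>" and sp: "sets \<pi> = sets borel" and t: "t \<ge> 0" and B: "B \<in> sets borel"
  shows "\<bar>measure (trans M X t 0) B - measure \<pi> B\<bar> \<le> tv_norm (trans M X t 0) \<pi>"
proof -
  interpret P: prob_space \<pi> by (rule pp)
  let ?T = "trans M X t 0"
  interpret T: prob_space ?T unfolding trans_def
    by (rule prob_space_distr) (rule Xmeas[OF order.refl t])
  have sT: "sets ?T = sets borel" unfolding trans_def by simp
  define f where "f A = \<bar>measure ?T A - measure \<pi> A\<bar> + \<bar>measure ?T (space ?T - A) - measure \<pi> (space ?T - A)\<bar>" for A
  have bdd: "bdd_above (f ` sets ?T)"
  proof (rule bdd_aboveI[of _ 4])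
    fix z assume "z \<in> f ` sets ?T"
    then obtain A where z: "z = f A" by blast
    have "\<bar>measure ?T A - measure \<pi> A\<bar> \<le> 2"
      using T.prob_le_1[of A] P.prob_le_1[of A] measure_nonneg[of ?T A] measure_nonneg[of \<pi> A]
      by (smt (verit))
    moreover have "\<bar>measure ?T (space ?T - A) - measure \<pi> (space ?T - A)\<bar> \<le> 2"
      using T.prob_le_1[of "space ?T - A"] P.prob_le_1[of "space ?T - A"]
        measure_nonneg[of ?T "space ?T - A"] measure_nonneg[of \<pi> "space ?T - A"]
      by (smt (verit))
    ultimately show "z \<le> 4" unfolding z f_def by simp
  qed
  have "f B \<le> tv_norm ?T \<pi>"
    unfolding tv_norm_def f_def[symmetric] using B sT bdd by (intro cSUP_upper) auto
  moreover have "\<bar>measure ?T B - measure \<pi> B\<bar> \<le> f B" unfolding f_def by simp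
  ultimately show ?thesis by simp
qed

end

context ou_setting begin

lemma part2:
  assumes inv: "invariant_measure M X \<pi>" and pp: "prob_space \<pi>" and \<kappa>: "\<kappa> > 1"
    and lim: "((\<lambda>t. \<kappa> powr t * tv_norm (trans M X t 0) \<pi>) \<longlongrightarrow> 0) at_top"
  shows "\<not> heavy_tailed (distr F borel ln)"
proof -
  interpret P: prob_space \<pi> by (rule pp)
  have sp: "sets \<pi> = sets borel" using inv unfolding invariant_measure_def by auto
  have spc: "space \<pi> = UNIV" using sets_eq_imp_space_eq[OF sp] by simp
  define tv where "tv t = tv_norm (trans M X t 0) \<pi>" for t
  define c where "c = 1 - exp (- lam)"
  have c: "c > 0" using lam unfolding c_def by simp
  have "eventually (\<lambda>t. \<kappa> powr t * tv t < 1) at_top"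
    using order_tendstoD(2)[OF lim, of 1] unfolding tv_def by simp
  then obtain T0 where T0: "\<And>t. t \<ge> T0 \<Longrightarrow> \<kappa> powr t * tv t < 1"
    unfolding eventually_at_top_linorder by blast
  obtain n4 where n4: "4 < \<kappa> ^ n4" using real_arch_pow[OF \<kappa>] by blast
  define N1 where "N1 = max n4 (nat \<lceil>max T0 0\<rceil>)"
  have N1T: "real n \<ge> T0" if "n \<ge> N1" for n
  proof -
    have "nat \<lceil>max T0 0\<rceil> \<le> n" using that unfolding N1_def by simp
    hence "\<lceil>max T0 0\<rceil> \<le> int n" by linarith
    hence "real_of_int \<lceil>max T0 0\<rceil> \<le> real_of_int (int n)" by (simp only: of_int_le_iff)
    moreover have "real_of_int \<lceil>max T0 0\<rceil> \<ge> T0" by linarith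
    ultimately show ?thesis by simp
  qed
  have N1k: "\<kappa> ^ n > 4" if "n \<ge> N1" for n
  proof -
    have "\<kappa> ^ n4 \<le> \<kappa> ^ n" using \<kappa> that unfolding N1_def by (intro power_increasing) auto
    thus ?thesis using n4 by simp
  qed
  have "(\<lambda>n. measure \<pi> {..real n}) \<longlonglongrightarrow> measure \<pi> (\<Union>n. {..real n})"
    by (rule P.finite_Lim_measure_incseq) (auto simp: sp incseq_def)
  moreover have "(\<Union>n. {..real n}) = UNIV"
  proof -
    have "x \<in> (\<Union>n. {..real n})" for x :: real
    proof -
      obtain n where "x \<le> real n" using real_arch_simple by blast
      thus ?thesis by auto
    qed
    thus ?thesis by auto
  qed
  ultimately have "(\<lambda>n. measure \<pi> {..real n}) \<longlonglongrightarrow> 1" using P.prob_space spc by simp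
  from order_tendstoD(1)[OF this, of "3/4"] obtain n0 where n0: "measure \<pi> {..real n0} > 3/4"
    by (auto simp: eventually_sequentially)
  define y0 where "y0 = real n0 + 1"
  have y0: "y0 > 0" unfolding y0_def by simp
  have py0: "measure \<pi> {..y0} > 3/4"
  proof -
    have "measure \<pi> {..real n0} \<le> measure \<pi> {..y0}"
      by (intro P.finite_measure_mono) (auto simp: y0_def sp)
    thus ?thesis using n0 by simp
  qed
  have bd: "measure F {y0 * exp (\<mu> * (real n + 1))<..} \<le> (2 / c) / \<kappa> ^ n" if n: "n \<ge> N1" for n
  proof -
    define t where "t = real n"
    have t0: "t \<ge> 0" unfolding t_def by simp
    have kp: "\<kappa> powr t = \<kappa> ^ n" unfolding t_def using \<kappa> by (simp add: powr_realpow)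
    have kpos: "\<kappa> ^ n > 0" using \<kappa> by simp
    have "\<kappa> powr t * tv t < 1" using T0[OF N1T[OF n]] unfolding t_def .
    hence "\<kappa> ^ n * tv t < 1" unfolding kp .
    hence tvk: "tv t < 1 / \<kappa> ^ n" using kpos by (simp add: field_simps)
    have k4: "1 / \<kappa> ^ n < 1 / 4" using N1k[OF n] by (simp add: field_simps)
    let ?T = "trans M X t 0"
    interpret T: prob_space ?T unfolding trans_def
      by (rule prob_space_distr) (rule Xmeas[OF order.refl t0])
    have sT: "sets ?T = sets borel" unfolding trans_def by simp
    have spT: "space ?T = UNIV" using sets_eq_imp_space_eq[OF sT] by simp
    define Q where "Q = q t y0"
    have TQ: "measure ?T {y0<..} = Q"
      unfolding Q_def q_def trans_def using Xmeas[OF order.refl t0]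
      by (subst measure_distr) (auto simp: vimage_def Int_def conj_commute)
    have Tc: "measure ?T {..y0} = 1 - Q"
    proof -
      have "measure ?T (space ?T - {y0<..}) = 1 - measure ?T {y0<..}"
        by (rule T.prob_compl) (simp add: sT)
      moreover have "space ?T - {y0<..} = {..y0}" using spT by auto
      ultimately show ?thesis using TQ by simp
    qed
    have "\<bar>measure ?T {..y0} - measure \<pi> {..y0}\<bar> \<le> tv t"
      unfolding tv_def by (rule tv_bound[OF pp sp t0]) simp
    hence Qh: "1 - Q \<ge> 1/2" using Tc py0 tvk k4 by linarith
    have "\<bar>measure ?T {y0<..} - measure \<pi> {y0<..}\<bar> \<le> tv t"
      unfolding tv_def by (rule tv_bound[OF pp sp t0]) simp
    hence Qd: "measure \<pi> {y0<..} - Q < 1 / \<kappa> ^ n" using TQ tvk by linarith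
    define b where "b = y0 * exp (\<mu> * t)"
    define hb where "hb = measure \<pi> {b<..}"
    have "hb + (1 - hb) * Q \<le> measure \<pi> {y0<..}"
      using inv_ineq_real[OF inv pp t0, of y0] unfolding hb_def b_def Q_def .
    hence "hb * (1 - Q) < 1 / \<kappa> ^ n" using Qd by (simp add: algebra_simps)
    moreover have "hb * (1/2) \<le> hb * (1 - Q)" using Qh unfolding hb_def by (intro mult_left_mono) auto
    ultimately have hbb: "hb \<le> 2 / \<kappa> ^ n" by simp
    have "measure \<pi> {b * exp (\<mu> * 1)<..} + (1 - measure \<pi> {b * exp (\<mu> * 1)<..}) * q 1 b \<le> hb"
      using inv_ineq_real[OF inv pp, of 1 b] unfolding hb_def by simp
    moreover have "measure \<pi> {b * exp (\<mu> * 1)<..} * (1 - q 1 b) \<ge> 0"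
      using q_le1[of 1 b] by simp
    ultimately have "q 1 b \<le> hb" by (simp add: algebra_simps)
    moreover have "q 1 b \<ge> c * measure F {b * exp \<mu><..}" using q1_lower unfolding c_def .
    moreover have "b * exp \<mu> = y0 * exp (\<mu> * (real n + 1))"
      unfolding b_def t_def by (simp add: exp_add[symmetric] algebra_simps)
    ultimately have "c * measure F {y0 * exp (\<mu> * (real n + 1))<..} \<le> 2 / \<kappa> ^ n"
      using hbb by simp
    hence "measure F {y0 * exp (\<mu> * (real n + 1))<..} \<le> (2 / \<kappa> ^ n) / c"
      using c by (subst pos_le_divide_eq) (auto simp: mult.commute)
    thus ?thesis by (simp add: mult.commute)
  qed
  show ?thesis
    by (rule heavy_contra[OF \<kappa> y0 _ bd]) (use c in auto)
qed

end

theorem lemma17: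
  fixes M :: "'a measure" and \<mu> lam :: real and N :: "real \<Rightarrow> 'a \<Rightarrow> nat"
    and W :: "nat \<Rightarrow> 'a \<Rightarrow> real" and F :: "real measure"
    and X :: "real \<Rightarrow> real \<Rightarrow> 'a \<Rightarrow> real"
  assumes "prob_space M" and "\<mu> > 0" and "lam > 0"
    and "poisson_process M lam N"
    and "prob_space F" and "sets F = sets borel" and "emeasure F {0<..} = 1"
    and "\<forall>i\<ge>1. W i \<in> borel_measurable M \<and> distr M borel (W i) = F"
    and "prob_space.indep_vars M (\<lambda>_. borel) W {1..}"
    and "prob_space.indep_set M
           (sigma_sets (space M) (\<Union>t. {N t -` A \<inter> space M | A. A \<subseteq> (UNIV::nat set)}))
           (sigma_sets (space M) (\<Union>i\<in>{1..}. {W i -` B \<inter> space M | B. B \<in> sets borel}))"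
    and "\<forall>x\<ge>0. ou_solution M \<mu> N W x (X x)"
  shows "((\<integral>\<^sup>+ y. ennreal y \<partial>(distr F borel ln)) = \<infinity> \<and>
          (\<integral>\<^sup>+ y. ennreal (- y) \<partial>(distr F borel ln)) < \<infinity>
            \<longrightarrow> \<not> positive_recurrent M X)
       \<and> (heavy_tailed (distr F borel ln) \<longrightarrow> \<not> geometrically_ergodic M X)"
  proof -
  interpret ou: ou_setting M \<mu> lam N W F X
    by (intro ou_setting.intro ou_setting_axioms.intro assms)
  show ?thesis
  proof (intro conjI impI)
    assume h: "(\<integral>\<^sup>+ y. ennreal y \<partial>(distr F borel ln)) = \<infinity> \<and>
          (\<integral>\<^sup>+ y. ennreal (- y) \<partial>(distr F borel ln)) < \<infinity>"
    show "\<not> positive_recurrent M X"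
    proof
      assume "positive_recurrent M X"
      then obtain \<pi> where "invariant_measure M X \<pi>" "emeasure \<pi> UNIV < \<infinity>"
        unfolding positive_recurrent_def by blast
      thus False using ou.part1 h by blast
    qed
  next
    assume h: "heavy_tailed (distr F borel ln)"
    show "\<not> geometrically_ergodic M X"
    proof
      assume "geometrically_ergodic M X"
      then obtain \<pi> \<kappa> where "invariant_measure M X \<pi>" "prob_space \<pi>" "\<kappa> > 1"
        "((\<lambda>t. \<kappa> powr t * tv_norm (trans M X t 0) \<pi>) \<longlongrightarrow> 0) at_top"
        unfolding geometrically_ergodic_def by auto
      thus False using ou.part2 h by blast
    qed
  qed
qed

end
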